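(* Let $\Pi=(V_p,V_r,L,\ell_{\mathrm{init}},\ell_{\mathrm{out}},\mu_{\mathrm{init}},\mathcal D,\mathfrak T)$ be a score-at-end WPTS. Let $h:L\times\mathbb{R}^{|V_p|}\to\mathbb{R}$ be a bounded function (i.e. $\sup|h|<\infty$). If $h$ is a potential upper weight function (PUWF), then for every $\mathbf v_{\mathrm{init}}\in\operatorname{supp}\mu_{\mathrm{init}}$ we have $[\![\Pi]\!]_{\mathbf v_{\mathrm{init}}}(\mathbb{R}^{|V_p|})\le h(\ell_{\mathrm{init}},\mathbf v_{\mathrm{init}})$. If $h$ is a potential lower weight function (PLWF), then for every $\mathbf v_{\mathrm{init}}\in\operatorname{supp}\mu_{\mathrm{init}}$ we have $[\![\Pi]\!]_{\mathbf v_{\mathrm{init}}}(\mathbb{R}^{|V_p|})\ge h(\ell_{\mathrm{init}},\mathbf v_{\mathrm{init}})$.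
   Context: A weighted probabilistic transition system (WPTS) is a tuple $\Pi=(V_p,V_r,L,\ell_{\mathrm{init}},\ell_{\mathrm{out}},\mu_{\mathrm{init}},\mathcal D,\mathfrak T)$ where: $V_p$ (program variables) and $V_r$ (sampling variables) are finite disjoint sets; a program valuation is $\mathbf v\in\mathbb{R}^{|V_p|}$ and a sampling valuation is $\mathbf r\in\mathbb{R}^{|V_r|}$; $L$ is a finite set of locations with $\ell_{\mathrm{init}},\ell_{\mathrm{out}}\in L$; $\mu_{\mathrm{init}}$ is a probability distribution on $\mathbb{R}^{|V_p|}$ with bounded support; $\mathcal D$ is a product probability distribution on $\mathbb{R}^{|V_r|}$ (each sampling variable independently distributed); $\mathfrak T$ is a finite set of transitions $\tau=\langle \ell,\phi,F_1,\dots,F_k\rangle$ with source location $\ell\neq\ell_{\mathrm{out}}$, guard $\phi$ (a measurable predicate on program valuations) and forks $F_j=\langle \ell'_j,p_j,\mathrm{upd}_j,\mathrm{wt}_j\rangle$, where $\ell'_j\in L$, $p_j\in(0,1]$ with $\sum_j p_j=1$, $\mathrm{upd}_j:\mathbb{R}^{|V_p|}\times\mathbb{R}^{|V_r|}\to\mathbb{R}^{|V_p|}$ measurable (update function) and $\mathrm{wt}_j:\mathbb{R}^{|V_p|}\times\mathbb{R}^{|V_r|}\to[0,\infty)$ measurable (score function). The WPTS is deterministic and total: for every location $\ell\ne\ell_{\mathrm{out}}$ and valuation $\mathbf v$ there is exactly one transition with source $\ell$ whose guard $\mathbf v$ satisfies. Semantics: from a state $(\ell,\mathbf v)$ the run starts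 with weighted state $(\ell,\mathbf v,1)$. From a weighted state $(\ell_n,\mathbf v_n,w_n)$: if $\ell_n=\ell_{\mathrm{out}}$ the next weighted state is the same; otherwise take the unique enabled transition $\langle\ell_n,\phi,F_1,\dots,F_k\rangle$, choose fork $j$ with probability $p_j$, sample $\mathbf r\sim\mathcal D$ independently, and move to $(\ell'_j,\mathrm{upd}_j(\mathbf v_n,\mathbf r),w_n\cdot\mathrm{wt}_j(\mathbf v_n,\mathbf r))$. $\mathbb P_{(\ell,\mathbf v)},\mathbb E_{(\ell,\mathbf v)}$ denote the induced probability and expectation on runs; for an initial valuation $\mathbf v$ we write $\mathbb P_{\mathbf v},\mathbb E_{\mathbf v}$ for the case $\ell=\ell_{\mathrm{init}}$. The termination time is $T=\min\{n:\ell_n=\ell_{\mathrm{out}}\}$ ($\min\emptyset=\infty$); $\hat{\mathbf v}_T,\hat w_T$ are the valuation and weight at termination. A state $(\ell,\mathbf v)$ is reachable if it occurs in some run starting from $(\ell_{\mathrm{init}},\mathbf v_0)$ with $\mathbf v_0\in\operatorname{supp}\mu_{\mathrm{init}}$. $\Pi$ is almost-surely terminating (AST) if $\mathbb P_{\mathbf v}(T<\infty)=1$ for all $\mathbf v\in\operatorname{supp}\mu_{\mathrm{init}}$. For measurable $U\subseteq\mathbb{R}^{|V_p|}$, the expected weight is $[\![\Pi]\!]_{\mathbf v}(U):=\mathbb E_{\mathbf v}[\mathbf 1_{T<\infty}\,[\hat{\mathbf v}_T\in U]\,\hat w_T]$. $\Pi$ is score-at-end if: (i) it is AST; (ii) exactly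 one transition has a fork with destination $\ell_{\mathrm{out}}$, and that transition has the form $\langle\ell,\phi,F\rangle$ with a single fork $F=\langle\ell_{\mathrm{out}},1,\mathrm{id},\mathrm{wt}\rangle$ where $\mathrm{id}(\mathbf v,\mathbf r)=\mathbf v$ and $0\le\mathrm{wt}\le M$ for some constant $M>0$; (iii) every other fork has score function constantly $1$. The expected-weight transformer maps $h:L\times\mathbb{R}^{|V_p|}\to\mathbb{R}$ to $\mathrm{ewt}(h)$ with $\mathrm{ewt}(h)(\ell_{\mathrm{out}},\mathbf v)=1$ and, for $\ell\ne\ell_{\mathrm{out}}$ with unique enabled transition $\langle\ell,\phi,F_1,\dots,F_k\rangle$, $F_j=\langle\ell'_j,p_j,\mathrm{upd}_j,\mathrm{wt}_j\rangle$: $\mathrm{ewt}(h)(\ell,\mathbf v)=\sum_{j=1}^k p_j\,\mathbb E_{\mathbf r\sim\mathcal D}[\mathrm{wt}_j(\mathbf v,\mathbf r)\,h(\ell'_j,\mathrm{upd}_j(\mathbf v,\mathbf r))]$. A PUWF is a function $h:L\times\mathbb{R}^{|V_p|}\to\mathbb{R}$ such that (C1) $\mathrm{ewt}(h)(\ell,\mathbf v)\le h(\ell,\mathbf v)$ for all reachable states $(\ell,\mathbf v)$ with $\ell\ne\ell_{\mathrm{out}}$, and (C2) $h(\ell_{\mathrm{out}},\mathbf v)=1$ for all reachable states $(\ell_{\mathrm{out}},\mathbf v)$. A PLWF satisfies (C2) and (C1') $\mathrm{ewt}(h)(\ell,\mathbf v)\ge h(\ell,\mathbf v)$ for all reachable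 states with $\ell\ne\ell_{\mathrm{out}}$. *)

theory Defs
  imports "HOL-Probability.Probability"
begin

text \<open>Locations form a finite type 'l; program valuations are vectors in real^'p
  (index type 'p = V_p), sampling valuations are vectors in real^'r (index type 'r = V_r).\<close>

record ('l, 'p::finite, 'r::finite) fork =
  f_dest :: 'l
  f_prob :: real
  f_upd  :: "real^'p \<Rightarrow> real^'r \<Rightarrow> real^'p"
  f_wt   :: "real^'p \<Rightarrow> real^'r \<Rightarrow> real"

record ('l, 'p::finite, 'r::finite) transition =
  t_src   :: 'l
  t_guard :: "real^'p \<Rightarrow> bool"
  t_forks :: "('l, 'p, 'r) fork list"

record ('l, 'p::finite, 'r::finite) wpts =
  w_init :: 'l
  w_out  :: 'l
  w_mu   :: "(real^'p) measure"
  w_D    :: "(real^'r) measure"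
  w_T    :: "('l, 'p, 'r) transition set"

definition supp_meas :: "'a::topological_space measure \<Rightarrow> 'a set" where
  "supp_meas M = {x. \<forall>U. open U \<and> x \<in> U \<longrightarrow> emeasure M U > 0}"

definition is_wpts :: "('l::finite, 'p::finite, 'r::finite) wpts \<Rightarrow> bool" where
  "is_wpts P \<longleftrightarrow>
     finite (w_T P) \<and>
     prob_space (w_mu P) \<and> sets (w_mu P) = sets borel \<and> bounded (supp_meas (w_mu P)) \<and>
     prob_space (w_D P) \<and> sets (w_D P) = sets borel \<and>
     prob_space.indep_vars (w_D P) (\<lambda>_. borel) (\<lambda>i x. x $ i) UNIV \<and>
     (\<forall>\<tau>\<in>w_T P. t_src \<tau> \<noteq> w_out P \<and> t_forks \<tau> \<noteq> [] \<and>
        {v. t_guard \<tau> v} \<in> sets borel \<and>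
        (\<Sum>f\<leftarrow>t_forks \<tau>. f_prob f) = 1 \<and>
        (\<forall>f\<in>set (t_forks \<tau>). 0 < f_prob f \<and> f_prob f \<le> 1 \<and>
           case_prod (f_upd f) \<in> measurable (borel \<Otimes>\<^sub>M borel) borel \<and>
           case_prod (f_wt f) \<in> borel_measurable (borel \<Otimes>\<^sub>M borel) \<and>
           (\<forall>v r. 0 \<le> f_wt f v r))) \<and>
     (\<forall>l v. l \<noteq> w_out P \<longrightarrow> (\<exists>!\<tau>. \<tau> \<in> w_T P \<and> t_src \<tau> = l \<and> t_guard \<tau> v))"

definition enabled :: "('l::finite, 'p::finite, 'r::finite) wpts \<Rightarrow> 'l \<Rightarrow> real^'p \<Rightarrow> ('l, 'p, 'r) transition" where
  "enabled P l v = (THE \<tau>. \<tau> \<in> w_T P \<and> t_src \<tau> = l \<and> t_guard \<tau> v)"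

text \<open>Choosing fork j with probability p_j from a uniform seed u in [0,1).\<close>
fun pick_fork :: "('l, 'p::finite, 'r::finite) fork list \<Rightarrow> real \<Rightarrow> ('l, 'p, 'r) fork" where
  "pick_fork [] u = undefined"
| "pick_fork [f] u = f"
| "pick_fork (f # g # fs) u = (if u < f_prob f then f else pick_fork (g # fs) (u - f_prob f))"

text \<open>Randomness of a run: an i.i.d. sequence of (fork seed u ~ Uniform[0,1), r ~ D).\<close>
definition seed_space :: "('l::finite, 'p::finite, 'r::finite) wpts \<Rightarrow> (nat \<Rightarrow> real \<times> (real^'r)) measure" where
  "seed_space P = PiM UNIV (\<lambda>_::nat. uniform_measure lborel {0..<1::real} \<Otimes>\<^sub>M w_D P)"

definition step :: "('l::finite, 'p::finite, 'r::finite) wpts \<Rightarrow> 'l \<times> (real^'p) \<times> real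
    \<Rightarrow> real \<times> (real^'r) \<Rightarrow> 'l \<times> (real^'p) \<times> real" where
  "step P s x = (case s of (l, v, w) \<Rightarrow> case x of (u, r) \<Rightarrow>
     if l = w_out P then (l, v, w)
     else (let f = pick_fork (t_forks (enabled P l v)) u
           in (f_dest f, f_upd f v r, w * f_wt f v r)))"

primrec run :: "('l::finite, 'p::finite, 'r::finite) wpts \<Rightarrow> 'l \<times> (real^'p) \<times> real
    \<Rightarrow> (nat \<Rightarrow> real \<times> (real^'r)) \<Rightarrow> nat \<Rightarrow> 'l \<times> (real^'p) \<times> real" where
  "run P s \<omega> 0 = s"
| "run P s \<omega> (Suc n) = step P (run P s \<omega> n) (\<omega> n)"

definition terminates :: "('l::finite, 'p::finite, 'r::finite) wpts \<Rightarrow> 'l \<times> (real^'p) \<times> real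
    \<Rightarrow> (nat \<Rightarrow> real \<times> (real^'r)) \<Rightarrow> bool" where
  "terminates P s \<omega> \<longleftrightarrow> (\<exists>n. fst (run P s \<omega> n) = w_out P)"

definition term_time :: "('l::finite, 'p::finite, 'r::finite) wpts \<Rightarrow> 'l \<times> (real^'p) \<times> real
    \<Rightarrow> (nat \<Rightarrow> real \<times> (real^'r)) \<Rightarrow> nat" where
  "term_time P s \<omega> = (LEAST n. fst (run P s \<omega> n) = w_out P)"

text \<open>Expected weight [[P]]_v(U) = E_v[1_{T<\<infinity>} [v_T \<in> U] w_T], starting in (l_init, v) with weight 1.\<close>
definition expected_weight :: "('l::finite, 'p::finite, 'r::finite) wpts \<Rightarrow> real^'p \<Rightarrow> (real^'p) set \<Rightarrow> ennreal" where
  "expected_weight P v U =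
     (\<integral>\<^sup>+ \<omega>. (let s = (w_init P, v, 1::real) in
               if terminates P s \<omega> \<and> fst (snd (run P s \<omega> (term_time P s \<omega>))) \<in> U
               then ennreal (snd (snd (run P s \<omega> (term_time P s \<omega>)))) else 0) \<partial>seed_space P)"

definition AST :: "('l::finite, 'p::finite, 'r::finite) wpts \<Rightarrow> bool" where
  "AST P \<longleftrightarrow> (\<forall>v\<in>supp_meas (w_mu P).
      emeasure (seed_space P) {\<omega> \<in> space (seed_space P). terminates P (w_init P, v, 1) \<omega>} = 1)"

text \<open>Reachable states: those occurring in some run from (l_init, v0), v0 in supp mu_init
  (forks have positive probability; samples range over the support of D).\<close>
inductive_set reachable :: "('l::finite, 'p::finite, 'r::finite) wpts \<Rightarrow> ('l \<times> (real^'p)) set"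
  for P :: "('l, 'p, 'r) wpts" where
  init: "v \<in> supp_meas (w_mu P) \<Longrightarrow> (w_init P, v) \<in> reachable P"
| step: "(l, v) \<in> reachable P \<Longrightarrow> l \<noteq> w_out P \<Longrightarrow> f \<in> set (t_forks (enabled P l v)) \<Longrightarrow>
         r \<in> supp_meas (w_D P) \<Longrightarrow> (f_dest f, f_upd f v r) \<in> reachable P"

definition score_at_end :: "('l::finite, 'p::finite, 'r::finite) wpts \<Rightarrow> bool" where
  "score_at_end P \<longleftrightarrow> is_wpts P \<and> AST P \<and>
     (\<exists>!\<tau>. \<tau> \<in> w_T P \<and> (\<exists>f\<in>set (t_forks \<tau>). f_dest f = w_out P)) \<and>
     (\<forall>\<tau>\<in>w_T P. (\<exists>f\<in>set (t_forks \<tau>). f_dest f = w_out P) \<longrightarrow>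
        (\<exists>f. t_forks \<tau> = [f] \<and> f_dest f = w_out P \<and> f_prob f = 1 \<and> f_upd f = (\<lambda>v r. v) \<and>
             (\<exists>M>0. \<forall>v r. 0 \<le> f_wt f v r \<and> f_wt f v r \<le> M))) \<and>
     (\<forall>\<tau>\<in>w_T P. \<forall>f\<in>set (t_forks \<tau>). f_dest f \<noteq> w_out P \<longrightarrow> f_wt f = (\<lambda>v r. 1))"

definition ewt :: "('l::finite, 'p::finite, 'r::finite) wpts \<Rightarrow> ('l \<Rightarrow> real^'p \<Rightarrow> real) \<Rightarrow> 'l \<Rightarrow> real^'p \<Rightarrow> real" where
  "ewt P h l v = (if l = w_out P then 1 else
     (\<Sum>f\<leftarrow>t_forks (enabled P l v).
        f_prob f * (\<integral>r. f_wt f v r * h (f_dest f) (f_upd f v r) \<partial>w_D P)))"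

definition PUWF :: "('l::finite, 'p::finite, 'r::finite) wpts \<Rightarrow> ('l \<Rightarrow> real^'p \<Rightarrow> real) \<Rightarrow> bool" where
  "PUWF P h \<longleftrightarrow>
     (\<forall>(l, v)\<in>reachable P. l \<noteq> w_out P \<longrightarrow> ewt P h l v \<le> h l v) \<and>
     (\<forall>(l, v)\<in>reachable P. l = w_out P \<longrightarrow> h l v = 1)"

definition PLWF :: "('l::finite, 'p::finite, 'r::finite) wpts \<Rightarrow> ('l \<Rightarrow> real^'p \<Rightarrow> real) \<Rightarrow> bool" where
  "PLWF P h \<longleftrightarrow>
     (\<forall>(l, v)\<in>reachable P. l \<noteq> w_out P \<longrightarrow> ewt P h l v \<ge> h l v) \<and>
     (\<forall>(l, v)\<in>reachable P. l = w_out P \<longrightarrow> h l v = 1)"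

end

theory Submission
  imports Defs
begin


lemma pick_fork_in: "fs \<noteq> [] \<Longrightarrow> pick_fork fs u \<in> set fs"
  by (induction fs u rule: pick_fork.induct) auto

lemma pick_fork_meas:
  assumes "fs \<noteq> []" "set fs \<subseteq> B"
  shows "pick_fork fs \<in> measurable borel (count_space B)"
  using assms
proof (induction fs)
  case Nil then show ?case by simp
next
  case (Cons f fs)
  show ?case
  proof (cases fs)
    case Nil then show ?thesis using Cons by simp
  next
    case (Cons g gs)
    have m: "(\<lambda>u::real. pick_fork fs (u - f_prob f)) \<in> measurable borel (count_space B)"
      using Cons \<open>set (f # fs) \<subseteq> B\<close> Cons.IH by (intro measurable_compose[OF _ Cons.IH]) auto
    have "(\<lambda>u. if u < f_prob f then f else pick_fork fs (u - f_prob f)) \<in> measurable borel (count_space B)"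
      using \<open>set (f # fs) \<subseteq> B\<close> m by (intro measurable_If) auto
    moreover have "pick_fork (f # fs) = (\<lambda>u. if u < f_prob f then f else pick_fork fs (u - f_prob f))"
      using Cons by (auto simp: fun_eq_iff)
    ultimately show ?thesis by simp
  qed
qed

lemma supp_closed: "closed (supp_meas (M :: 'a::topological_space measure))"
proof -
  have "open (- supp_meas M)"
    unfolding open_subopen[of "- supp_meas M"]
  proof
    fix x assume "x \<in> - supp_meas M"
    then obtain U where U: "open U" "x \<in> U" "\<not> emeasure M U > 0" by (auto simp: supp_meas_def)
    have "U \<subseteq> - supp_meas M" using U by (auto simp: supp_meas_def)
    then show "\<exists>T. open T \<and> x \<in> T \<and> T \<subseteq> - supp_meas M" using U by blast
  qed
  then show ?thesis by (simp add: closed_def)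
qed

lemma supp_AE:
  fixes M :: "'a::{topological_space, second_countable_topology} measure"
  assumes "sets M = sets borel"
  shows "AE x in M. x \<in> supp_meas M"
proof -
  let ?F = "{U. open U \<and> emeasure M U = 0}"
  have "\<forall>S\<in>?F. open S" by auto
  from Lindelof[of ?F] obtain F' where F': "F' \<subseteq> ?F" "countable F'" "\<Union>F' = \<Union>?F" by blast
  have null: "(\<Union>i\<in>F'. i) \<in> null_sets M"
    using F' assms by (intro null_sets_UN') (auto simp: null_sets_def)
  have "- supp_meas M \<subseteq> \<Union>?F" by (auto simp: supp_meas_def)
  then have "- supp_meas M \<subseteq> \<Union>F'" using F' by simp
  then show ?thesis using null
    by (intro AE_I[of _ _ "\<Union>F'"]) (auto simp: null_sets_def)
qed




abbreviation "Unif \<equiv> uniform_measure lborel {0..<1::real}"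

lemma Unif_prob: "prob_space Unif"
  by (rule prob_space_uniform_measure) auto

lemma Unif_fin: "emeasure Unif A < \<infinity>"
  using prob_space.emeasure_le_1[OF Unif_prob, of A] by (simp add: order_le_less_trans)

lemma Unif_measure:
  assumes "B \<in> sets borel"
  shows "measure Unif B = measure lborel ({0..<1} \<inter> B)"
  using assms by (subst measure_uniform_measure) auto

lemma Unif_ind:
  assumes "0 \<le> a" "a \<le> b" "b \<le> 1"
  shows "has_bochner_integral Unif (indicator {a..<b}) (b - a)"
proof -
  have "has_bochner_integral Unif (indicator {a..<b}) (measure Unif {a..<b})"
    by (rule has_bochner_integral_real_indicator[OF _ Unif_fin]) auto
  moreover have "{0..<1} \<inter> {a..<b} = {a..<b}" using assms by auto
  ultimately show ?thesis using assms by (simp add: Unif_measure)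
qed

lemma Unif_ind':
  assumes "0 \<le> a" "a \<le> 1"
  shows "has_bochner_integral Unif (indicator {a..}) (1 - a)"
proof -
  have "has_bochner_integral Unif (indicator {a..}) (measure Unif {a..})"
    by (rule has_bochner_integral_real_indicator[OF _ Unif_fin]) auto
  moreover have "{0..<1} \<inter> {a..} = {a..<1}" using assms by auto
  ultimately show ?thesis using assms by (simp add: Unif_measure)
qed

lemma pick_fork_integral:
  fixes \<phi> :: "('l,'p::finite,'r::finite) fork \<Rightarrow> real"
  assumes "fs \<noteq> []" "\<forall>f\<in>set fs. 0 < f_prob f" "0 \<le> a" "a + (\<Sum>f\<leftarrow>fs. f_prob f) = 1"
  shows "has_bochner_integral Unif (\<lambda>u. indicator {a..} u * \<phi> (pick_fork fs (u - a)))
           (\<Sum>f\<leftarrow>fs. f_prob f * \<phi> f)"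
  using assms
proof (induction fs arbitrary: a)
  case Nil then show ?case by simp
next
  case (Cons f fs)
  note CIH = Cons.IH and CP = Cons.prems
  show ?case
  proof (cases "fs = []")
    case True
    then have "has_bochner_integral Unif (\<lambda>u. indicator {a..} u * \<phi> f) ((1 - a) * \<phi> f)"
      using CP by (intro has_bochner_integral_mult_left Unif_ind') auto
    moreover have "1 - a = f_prob f" using CP True by simp
    ultimately show ?thesis using True by simp
  next
    case False
    then obtain g gs where fs: "fs = g # gs" by (cases fs) auto
    have pos: "0 \<le> (\<Sum>f\<leftarrow>fs. f_prob f)"
      using CP(2) by (intro sum_list_nonneg) auto
    have pf: "0 < f_prob f" using CP by auto
    have IH: "has_bochner_integral Unif (\<lambda>u. indicator {a + f_prob f..} u * \<phi> (pick_fork fs (u - (a + f_prob f))))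
           (\<Sum>f\<leftarrow>fs. f_prob f * \<phi> f)"
    proof (rule CIH)
      show "fs \<noteq> []" by fact
      show "\<forall>f\<in>set fs. 0 < f_prob f" using CP(2) by simp
      show "0 \<le> a + f_prob f" using CP(3) pf by simp
      show "a + f_prob f + (\<Sum>f\<leftarrow>fs. f_prob f) = 1" using CP(4) by simp
    qed
    have I1: "has_bochner_integral Unif (\<lambda>u. indicator {a..<a + f_prob f} u * \<phi> f) ((a + f_prob f - a) * \<phi> f)"
      using CP pos pf by (intro has_bochner_integral_mult_left Unif_ind) auto
    have eq: "indicator {a..} u * \<phi> (pick_fork (f # fs) (u - a)) =
       indicator {a..<a + f_prob f} u * \<phi> f + indicator {a + f_prob f..} u * \<phi> (pick_fork fs (u - (a + f_prob f)))"
      for u :: real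
    proof -
      have pe: "pick_fork (f # fs) (u - a) = (if u - a < f_prob f then f else pick_fork fs (u - a - f_prob f))"
        by (simp add: fs)
      have "u - a - f_prob f = u - (a + f_prob f)" by simp
      note e = this
      consider "u < a" | "a \<le> u" "u < a + f_prob f" | "a + f_prob f \<le> u" by linarith
      then show ?thesis
      proof cases
        case 1 then show ?thesis using pf by (simp add: indicator_def)
      next
        case 2 then show ?thesis unfolding pe by (simp add: indicator_def)
      next
        case 3 then show ?thesis unfolding pe e using pf by (simp add: indicator_def)
      qed
    qed
    from has_bochner_integral_add[OF I1 IH]
    show ?thesis by (simp add: eq)
  qed
qed

lemma pick_fork_integral0:
  fixes \<phi> :: "('l,'p::finite,'r::finite) fork \<Rightarrow> real"
  assumes "fs \<noteq> []" "\<forall>f\<in>set fs. 0 < f_prob f" "(\<Sum>f\<leftarrow>fs. f_prob f) = 1"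
  shows "has_bochner_integral Unif (\<lambda>u. \<phi> (pick_fork fs u)) (\<Sum>f\<leftarrow>fs. f_prob f * \<phi> f)"
proof -
  have h: "has_bochner_integral Unif (\<lambda>u. indicator {0..} u * \<phi> (pick_fork fs (u - 0)))
           (\<Sum>f\<leftarrow>fs. f_prob f * \<phi> f)"
    using assms by (intro pick_fork_integral) auto
  have pm: "pick_fork fs \<in> measurable Unif (count_space (set fs))"
    using pick_fork_meas[OF assms(1) order_refl] by (simp add: measurable_cong_sets)
  have m: "(\<lambda>u. \<phi> (pick_fork fs u)) \<in> borel_measurable Unif"
    by (rule measurable_compose_countable'[where I="set fs" and g="pick_fork fs" and f="\<lambda>f u. \<phi> f", OF _ pm]) (auto intro: countable_finite)
  have m2: "(\<lambda>u. indicator {0..} u * \<phi> (pick_fork fs (u - 0))) \<in> borel_measurable Unif"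
    using m by simp
  have "AE u in lborel. u \<in> {0..<1::real} \<longrightarrow> indicator {0..} u * \<phi> (pick_fork fs (u - 0)) = \<phi> (pick_fork fs u)"
    by (intro AE_I2) (simp add: indicator_def)
  then have ae: "AE u in Unif. indicator {0..} u * \<phi> (pick_fork fs (u - 0)) = \<phi> (pick_fork fs u)"
    by (intro AE_uniform_measureI) auto
  show ?thesis using h has_bochner_integral_cong_AE[OF m2 m ae] by simp
qed




locale sae =
  fixes P :: "('l::finite,'p::finite,'r::finite) wpts" and h :: "'l \<Rightarrow> real^'p \<Rightarrow> real"
  assumes sae: "score_at_end P" and hbd: "\<exists>B. \<forall>l v. \<bar>h l v\<bar> \<le> B"
    and hmeas: "\<forall>l. h l \<in> borel_measurable borel"
begin

lemma wp: "is_wpts P" using sae by (simp add: score_at_end_def)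

lemma finT: "finite (w_T P)" using wp by (simp add: is_wpts_def)
lemma D_prob: "prob_space (w_D P)" using wp by (simp add: is_wpts_def)
lemma D_sets[measurable_cong]: "sets (w_D P) = sets borel" using wp by (simp add: is_wpts_def)
lemma D_space: "space (w_D P) = UNIV" using sets_eq_imp_space_eq[OF D_sets] by simp

lemma T_props:
  assumes "\<tau> \<in> w_T P"
  shows "t_src \<tau> \<noteq> w_out P" "t_forks \<tau> \<noteq> []" "{v. t_guard \<tau> v} \<in> sets borel"
    "(\<Sum>f\<leftarrow>t_forks \<tau>. f_prob f) = 1"
    "\<And>f. f \<in> set (t_forks \<tau>) \<Longrightarrow> 0 < f_prob f"
    "\<And>f. f \<in> set (t_forks \<tau>) \<Longrightarrow> case_prod (f_upd f) \<in> measurable (borel \<Otimes>\<^sub>M borel) borel"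
    "\<And>f. f \<in> set (t_forks \<tau>) \<Longrightarrow> case_prod (f_wt f) \<in> borel_measurable (borel \<Otimes>\<^sub>M borel)"
  using wp assms unfolding is_wpts_def by blast+

lemma uniq: "l \<noteq> w_out P \<Longrightarrow> \<exists>!\<tau>. \<tau> \<in> w_T P \<and> t_src \<tau> = l \<and> t_guard \<tau> v"
  using wp unfolding is_wpts_def by blast

lemma enabled:
  assumes "l \<noteq> w_out P"
  shows "enabled P l v \<in> w_T P" "t_src (enabled P l v) = l" "t_guard (enabled P l v) v"
  using theI'[OF uniq[OF assms, of v]] unfolding enabled_def by auto

lemma enabled_eq:
  assumes "l \<noteq> w_out P" "\<tau> \<in> w_T P"
  shows "enabled P l v = \<tau> \<longleftrightarrow> t_src \<tau> = l \<and> t_guard \<tau> v"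
  using enabled[OF assms(1), of v] uniq[OF assms(1), of v] assms(2) by blast

lemma enabled_meas:
  assumes "l \<noteq> w_out P"
  shows "enabled P l \<in> measurable borel (count_space (w_T P))"
proof (subst measurable_count_space_eq2[OF finT], safe)
  fix v show "enabled P l v \<in> w_T P" using enabled[OF assms] by auto
next
  fix \<tau> assume t: "\<tau> \<in> w_T P"
  have "enabled P l -` {\<tau>} \<inter> space borel = (if t_src \<tau> = l then {v. t_guard \<tau> v} else {})"
    using enabled_eq[OF assms t] by auto
  then show "enabled P l -` {\<tau>} \<inter> space borel \<in> sets borel" using T_props(3)[OF t] by simp
qed

definition FS where "FS = (\<Union>\<tau>\<in>w_T P. set (t_forks \<tau>))"
lemma FS_fin: "finite FS" unfolding FS_def using finT by auto
lemma FS_count: "countable FS" using FS_fin by (rule countable_finite)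

lemma wt_bound_ex: "\<exists>K\<ge>1. \<forall>\<tau>\<in>w_T P. \<forall>f\<in>set (t_forks \<tau>). \<forall>v r.
   0 \<le> f_wt f v r \<and> f_wt f v r \<le> K \<and> (f_dest f \<noteq> w_out P \<longrightarrow> f_wt f v r = 1)"
proof -
  have ex1: "\<exists>!\<tau>. \<tau> \<in> w_T P \<and> (\<exists>f\<in>set (t_forks \<tau>). f_dest f = w_out P)"
    and A: "\<forall>\<tau>\<in>w_T P. (\<exists>f\<in>set (t_forks \<tau>). f_dest f = w_out P) \<longrightarrow>
        (\<exists>f. t_forks \<tau> = [f] \<and> f_dest f = w_out P \<and> f_prob f = 1 \<and> f_upd f = (\<lambda>v r. v) \<and>
             (\<exists>M>0. \<forall>v r. 0 \<le> f_wt f v r \<and> f_wt f v r \<le> M))"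
    and B: "\<forall>\<tau>\<in>w_T P. \<forall>f\<in>set (t_forks \<tau>). f_dest f \<noteq> w_out P \<longrightarrow> f_wt f = (\<lambda>v r. 1)"
    using sae unfolding score_at_end_def by blast+
  obtain \<tau>0 where t0: "\<tau>0 \<in> w_T P" "\<exists>f\<in>set (t_forks \<tau>0). f_dest f = w_out P"
    and u0: "\<And>\<tau>. \<tau> \<in> w_T P \<Longrightarrow> (\<exists>f\<in>set (t_forks \<tau>). f_dest f = w_out P) \<Longrightarrow> \<tau> = \<tau>0"
    using ex1 by blast
  obtain f0 M where f0: "t_forks \<tau>0 = [f0]" "M > 0" "\<forall>v r. 0 \<le> f_wt f0 v r \<and> f_wt f0 v r \<le> M"
    using A t0 by blast
  show ?thesis
  proof (intro exI[of _ "max 1 M"] conjI ballI allI impI)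
    fix \<tau> f v r assume t: "\<tau> \<in> w_T P" and f: "f \<in> set (t_forks \<tau>)"
    show "f_dest f \<noteq> w_out P \<Longrightarrow> f_wt f v r = 1" using B t f by auto
    have "0 \<le> f_wt f v r \<and> f_wt f v r \<le> max 1 M"
    proof (cases "f_dest f = w_out P")
      case True
      then have "\<tau> = \<tau>0" using u0 t f by blast
      then have "f = f0" using f f0 by simp
      then show ?thesis using f0(3)[rule_format, of v r] by auto
    next
      case False then show ?thesis using B t f by auto
    qed
    then show "0 \<le> f_wt f v r" "f_wt f v r \<le> max 1 M" by auto
  qed simp
qed

definition K where "K = (SOME K. K \<ge> 1 \<and> (\<forall>\<tau>\<in>w_T P. \<forall>f\<in>set (t_forks \<tau>). \<forall>v r.
   0 \<le> f_wt f v r \<and> f_wt f v r \<le> K \<and> (f_dest f \<noteq> w_out P \<longrightarrow> f_wt f v r = 1)))"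

lemma K: "K \<ge> 1" and wt_bound: "\<tau> \<in> w_T P \<Longrightarrow> f \<in> set (t_forks \<tau>) \<Longrightarrow>
   0 \<le> f_wt f v r \<and> f_wt f v r \<le> K \<and> (f_dest f \<noteq> w_out P \<longrightarrow> f_wt f v r = 1)"
  using someI_ex[OF wt_bound_ex] unfolding K_def[symmetric] by blast+

definition Inv :: "'l \<times> (real^'p) \<times> real \<Rightarrow> bool" where
  "Inv s = (case s of (l, v, w) \<Rightarrow> (l \<noteq> w_out P \<longrightarrow> w = 1) \<and> 0 \<le> w \<and> w \<le> K)"

lemma pick_in: "l \<noteq> w_out P \<Longrightarrow> pick_fork (t_forks (enabled P l v)) u \<in> set (t_forks (enabled P l v))"
  using pick_fork_in T_props(2) enabled(1) by blast

lemma step_Inv: "Inv s \<Longrightarrow> Inv (step P s x)"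
proof -
  assume I: "Inv s"
  obtain l v w where s: "s = (l, v, w)" by (cases s) auto
  obtain u r where x: "x = (u, r)" by (cases x) auto
  show ?thesis
  proof (cases "l = w_out P")
    case True then show ?thesis using I by (simp add: s x step_def)
  next
    case False
    let ?f = "pick_fork (t_forks (enabled P l v)) u"
    have w: "w = 1" using I False by (simp add: Inv_def s)
    have b: "0 \<le> f_wt ?f v r \<and> f_wt ?f v r \<le> K \<and> (f_dest ?f \<noteq> w_out P \<longrightarrow> f_wt ?f v r = 1)"
      using wt_bound[OF enabled(1)[OF False] pick_in[OF False]] .
    show ?thesis using False b by (simp add: s x step_def w Inv_def Let_def)
  qed
qed

lemma run_Inv: "Inv s \<Longrightarrow> Inv (run P s \<omega> n)"
  by (induction n) (auto intro: step_Inv)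

end



context sae begin

definition SM :: "('l \<times> (real^'p) \<times> real) measure" where
  "SM = count_space UNIV \<Otimes>\<^sub>M (borel \<Otimes>\<^sub>M borel)"
definition M0 where "M0 = Unif \<Otimes>\<^sub>M w_D P"
abbreviation "\<Omega> \<equiv> seed_space P"
lemma Omega_def: "\<Omega> = PiM UNIV (\<lambda>_. M0)" unfolding seed_space_def M0_def ..

lemma G_meas:
  assumes l: "l \<noteq> w_out P"
    and V: "V \<in> N \<rightarrow>\<^sub>M borel" and W: "W \<in> N \<rightarrow>\<^sub>M borel" and Uu: "Uu \<in> N \<rightarrow>\<^sub>M borel"
    and R: "R \<in> N \<rightarrow>\<^sub>M borel"
  shows "(\<lambda>x. let f = pick_fork (t_forks (enabled P l (V x))) (Uu x) in
           (f_dest f, f_upd f (V x) (R x), W x * f_wt f (V x) (R x))) \<in> N \<rightarrow>\<^sub>M SM"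
proof -
  have Fk: "(\<lambda>x. pick_fork (t_forks (enabled P l (V x))) (Uu x)) \<in> N \<rightarrow>\<^sub>M count_space FS"
  proof (rule measurable_compose_countable'[where I="w_T P" and f="\<lambda>\<tau> x. pick_fork (t_forks \<tau>) (Uu x)"
        and g="\<lambda>x. enabled P l (V x)"])
    fix \<tau> assume t: "\<tau> \<in> w_T P"
    have "set (t_forks \<tau>) \<subseteq> FS" using t unfolding FS_def by auto
    then show "(\<lambda>x. pick_fork (t_forks \<tau>) (Uu x)) \<in> N \<rightarrow>\<^sub>M count_space FS"
      by (intro measurable_compose[OF Uu pick_fork_meas[OF T_props(2)[OF t]]])
  next
    show "(\<lambda>x. enabled P l (V x)) \<in> N \<rightarrow>\<^sub>M count_space (w_T P)"
      by (rule measurable_compose[OF V enabled_meas[OF l]])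
    show "countable (w_T P)" using finT by (rule countable_finite)
  qed
  have H: "(\<lambda>x. (f_dest f, f_upd f (V x) (R x), W x * f_wt f (V x) (R x))) \<in> N \<rightarrow>\<^sub>M SM"
    if f: "f \<in> FS" for f
  proof -
    obtain \<tau> where t: "\<tau> \<in> w_T P" "f \<in> set (t_forks \<tau>)" using f unfolding FS_def by auto
    have u: "(\<lambda>x. f_upd f (V x) (R x)) \<in> N \<rightarrow>\<^sub>M borel"
      using measurable_compose[OF measurable_Pair[OF V R] T_props(6)[OF t]] by simp
    have w: "(\<lambda>x. f_wt f (V x) (R x)) \<in> N \<rightarrow>\<^sub>M borel"
      using measurable_compose[OF measurable_Pair[OF V R] T_props(7)[OF t]] by simp
    have w2: "(\<lambda>x. W x * f_wt f (V x) (R x)) \<in> N \<rightarrow>\<^sub>M borel"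
      using W w by (rule borel_measurable_times)
    show ?thesis unfolding SM_def
      by (intro measurable_Pair u w2) simp
  qed
  show ?thesis unfolding Let_def
    by (rule measurable_compose_countable'[OF H Fk FS_count])
qed

lemma step_meas: "(\<lambda>p. step P (fst p) (snd p)) \<in> SM \<Otimes>\<^sub>M M0 \<rightarrow>\<^sub>M SM"
proof -
  have g: "(\<lambda>p. fst (fst p)) \<in> SM \<Otimes>\<^sub>M M0 \<rightarrow>\<^sub>M count_space UNIV"
    unfolding SM_def by measurable
  have Z: "(\<lambda>p. snd (fst p)) \<in> SM \<Otimes>\<^sub>M M0 \<rightarrow>\<^sub>M borel \<Otimes>\<^sub>M borel"
    unfolding SM_def by measurable
  have V: "(\<lambda>p. fst (snd (fst p))) \<in> SM \<Otimes>\<^sub>M M0 \<rightarrow>\<^sub>M borel"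
    unfolding SM_def by measurable
  have W: "(\<lambda>p. snd (snd (fst p))) \<in> SM \<Otimes>\<^sub>M M0 \<rightarrow>\<^sub>M borel"
    unfolding SM_def by measurable
  have Uu: "(\<lambda>p. fst (snd p)) \<in> SM \<Otimes>\<^sub>M M0 \<rightarrow>\<^sub>M borel"
    unfolding SM_def M0_def by measurable
  have R: "(\<lambda>p. snd (snd p)) \<in> SM \<Otimes>\<^sub>M M0 \<rightarrow>\<^sub>M borel"
    unfolding SM_def M0_def by measurable
  have each: "(\<lambda>p. step P (l, snd (fst p)) (snd p)) \<in> SM \<Otimes>\<^sub>M M0 \<rightarrow>\<^sub>M SM" for l
  proof (cases "l = w_out P")
    case True
    have m: "(\<lambda>p. (l, snd (fst p))) \<in> SM \<Otimes>\<^sub>M M0 \<rightarrow>\<^sub>M SM"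
      unfolding SM_def using Z by (intro measurable_Pair) auto
    have eq: "(\<lambda>p. step P (l, snd (fst p)) (snd p)) = (\<lambda>p. (l, snd (fst p)))"
      using True by (intro ext) (auto simp: step_def split: prod.splits)
    show ?thesis unfolding eq by (rule m)
  next
    case False
    have eq: "(\<lambda>p. step P (l, snd (fst p)) (snd p)) = (\<lambda>p.
      (let f = pick_fork (t_forks (enabled P l (fst (snd (fst p))))) (fst (snd p)) in
           (f_dest f, f_upd f (fst (snd (fst p))) (snd (snd p)),
            snd (snd (fst p)) * f_wt f (fst (snd (fst p))) (snd (snd p)))))"
      using False by (intro ext) (auto simp: step_def split: prod.splits)
    show ?thesis unfolding eq by (rule G_meas[OF False V W Uu R])
  qed
  have "(\<lambda>p. step P (fst (fst p), snd (fst p)) (snd p)) \<in> SM \<Otimes>\<^sub>M M0 \<rightarrow>\<^sub>M SM"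
    by (rule measurable_compose_countable[OF each g])
  then show ?thesis by simp
qed

lemma run_meas: "(\<lambda>p. run P (fst p) (snd p) n) \<in> SM \<Otimes>\<^sub>M \<Omega> \<rightarrow>\<^sub>M SM"
proof (induction n)
  case 0 then show ?case by simp
next
  case (Suc n)
  have c: "(\<lambda>p. snd p n) \<in> SM \<Otimes>\<^sub>M \<Omega> \<rightarrow>\<^sub>M M0"
    unfolding Omega_def by (intro measurable_compose[OF measurable_snd measurable_component_singleton]) auto
  have "(\<lambda>p. step P (fst (run P (fst p) (snd p) n, snd p n)) (snd (run P (fst p) (snd p) n, snd p n)))
     \<in> SM \<Otimes>\<^sub>M \<Omega> \<rightarrow>\<^sub>M SM"
    by (rule measurable_compose[OF measurable_Pair[OF Suc c] step_meas])
  then show ?case by simp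
qed

definition Y :: "'l \<times> (real^'p) \<times> real \<Rightarrow> real" where
  "Y s = (case s of (l, v, w) \<Rightarrow> if l = w_out P then w else w * h l v)"

lemma Y_meas: "Y \<in> SM \<rightarrow>\<^sub>M borel"
proof -
  have each: "(\<lambda>s. if l = w_out P then snd (snd s) else snd (snd s) * h l (fst (snd s))) \<in> SM \<rightarrow>\<^sub>M borel" for l
  proof -
    have "h l \<in> borel_measurable borel" using hmeas by simp
    then show ?thesis unfolding SM_def by measurable
  qed
  have "(\<lambda>s. (\<lambda>l s. if l = w_out P then snd (snd s) else snd (snd s) * h l (fst (snd s))) (fst s) s) \<in> SM \<rightarrow>\<^sub>M borel"
    by (rule measurable_compose_countable[OF each]) (simp add: SM_def)
  moreover have "Y = (\<lambda>s. if fst s = w_out P then snd (snd s) else snd (snd s) * h (fst s) (fst (snd s)))"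
    by (intro ext) (auto simp: Y_def split: prod.splits)
  ultimately show ?thesis by simp
qed

end



context sae begin

lemma M0_prob: "prob_space M0"
  unfolding M0_def by (rule prob_space_pair[OF Unif_prob D_prob])

lemma seq: "sequence_space M0"
  unfolding sequence_space_def product_prob_space_def product_prob_space_axioms_def product_sigma_finite_def
  using M0_prob by (auto simp: prob_space_imp_sigma_finite)

lemma Omega_prob: "prob_space \<Omega>"
proof -
  interpret S: sequence_space M0 by (rule seq)
  show ?thesis unfolding Omega_def by (rule S.P.prob_space_axioms)
qed

lemma ps_UD: "pair_sigma_finite Unif (w_D P)"
  unfolding pair_sigma_finite_def using Unif_prob D_prob by (auto simp: prob_space_imp_sigma_finite)

lemma ps_M0: "pair_sigma_finite M0 \<Omega>"
  unfolding pair_sigma_finite_def using M0_prob Omega_prob by (auto simp: prob_space_imp_sigma_finite)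

definition CB where "CB = (SOME B. \<forall>l v. \<bar>h l v\<bar> \<le> B)"
lemma habs: "\<bar>h l v\<bar> \<le> CB" using someI_ex[OF hbd] unfolding CB_def[symmetric] by blast
lemma CB_nonneg: "0 \<le> CB" using habs[of undefined undefined] by simp

definition C where "C = K * (CB + 1)"

lemma Y_bound: "Inv s \<Longrightarrow> \<bar>Y s\<bar> \<le> C"
proof -
  assume I: "Inv s"
  obtain l v w where s: "s = (l, v, w)" by (cases s) auto
  have w: "0 \<le> w" "w \<le> K" using I by (auto simp: Inv_def s)
  have "\<bar>w * h l v\<bar> \<le> K * CB"
    using w habs[of l v] by (simp add: abs_mult mult_mono)
  then show ?thesis using w K CB_nonneg by (auto simp: Y_def s C_def algebra_simps)
qed

definition V :: "nat \<Rightarrow> 'l \<times> (real^'p) \<times> real \<Rightarrow> real" where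
  "V n s = (\<integral>\<omega>. Y (run P s \<omega> n) \<partial>\<Omega>)"

lemma run_shift: "run P s (case_nat x \<omega>) (Suc n) = run P (step P s x) \<omega> n"
  by (induction n) auto

lemma run_meas_s: "(\<lambda>\<omega>. run P s \<omega> n) \<in> \<Omega> \<rightarrow>\<^sub>M SM"
proof -
  have s: "s \<in> space SM" by (simp add: SM_def space_pair_measure)
  show ?thesis
    using measurable_compose[OF measurable_Pair[OF measurable_const[OF s] measurable_ident] run_meas[of n]]
    by simp
qed

lemma V_Suc:
  assumes I: "Inv s"
  shows "V (Suc n) s = (\<integral>x. V n (step P s x) \<partial>M0)" and "integrable M0 (\<lambda>x. V n (step P s x))"
proof -
  interpret S: sequence_space M0 by (rule seq)
  interpret PS: pair_sigma_finite M0 \<Omega> by (rule ps_M0)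
  interpret PR: prob_space "M0 \<Otimes>\<^sub>M \<Omega>" by (rule prob_space_pair[OF M0_prob Omega_prob])
  have T: "(\<lambda>(x, \<omega>). case_nat x \<omega>) \<in> M0 \<Otimes>\<^sub>M \<Omega> \<rightarrow>\<^sub>M \<Omega>"
    unfolding Omega_def by measurable
  have f: "(\<lambda>\<omega>. Y (run P s \<omega> (Suc n))) \<in> borel_measurable \<Omega>"
    by (rule measurable_compose[OF run_meas_s Y_meas])
  have s: "s \<in> space SM" by (simp add: SM_def space_pair_measure)
  have st: "(\<lambda>p. (step P s (fst p), snd p)) \<in> M0 \<Otimes>\<^sub>M \<Omega> \<rightarrow>\<^sub>M SM \<Otimes>\<^sub>M \<Omega>"
  proof (rule measurable_Pair)
    show "(\<lambda>p. step P s (fst p)) \<in> M0 \<Otimes>\<^sub>M \<Omega> \<rightarrow>\<^sub>M SM"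
      using measurable_compose[OF measurable_Pair[OF measurable_const[OF s] measurable_fst] step_meas] by simp
  qed simp
  have g: "(\<lambda>p. Y (run P (step P s (fst p)) (snd p) n)) \<in> borel_measurable (M0 \<Otimes>\<^sub>M \<Omega>)"
    using measurable_compose[OF measurable_compose[OF st run_meas] Y_meas] by simp
  have int: "integrable (M0 \<Otimes>\<^sub>M \<Omega>) (\<lambda>p. Y (run P (step P s (fst p)) (snd p) n))"
    by (rule PR.integrable_const_bound[where B=C]) (auto intro!: Y_bound run_Inv step_Inv I g)
  have "V (Suc n) s = (\<integral>\<omega>. Y (run P s \<omega> (Suc n)) \<partial>distr (M0 \<Otimes>\<^sub>M \<Omega>) \<Omega> (\<lambda>(x, \<omega>). case_nat x \<omega>))"
    unfolding V_def using S.PiM_iter by (simp add: Omega_def)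
  also have "\<dots> = (\<integral>p. Y (run P s (case_nat (fst p) (snd p)) (Suc n)) \<partial>(M0 \<Otimes>\<^sub>M \<Omega>))"
    by (subst integral_distr[OF T f]) (simp add: split_beta')
  also have "\<dots> = (\<integral>p. Y (run P (step P s (fst p)) (snd p) n) \<partial>(M0 \<Otimes>\<^sub>M \<Omega>))"
    by (simp only: run_shift)
  also have "\<dots> = (\<integral>x. V n (step P s x) \<partial>M0)"
    unfolding V_def using PS.integral_fst'[OF int] by simp
  finally show "V (Suc n) s = (\<integral>x. V n (step P s x) \<partial>M0)" .
  show "integrable M0 (\<lambda>x. V n (step P s x))"
    unfolding V_def using PS.integrable_fst'[OF int] by simp
qed

lemma run_out: "fst s = w_out P \<Longrightarrow> run P s \<omega> n = s"
  by (induction n) (auto simp: step_def split: prod.splits)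

lemma V_out: "V n (w_out P, v, w) = w"
proof -
  interpret O: prob_space \<Omega> by (rule Omega_prob)
  show ?thesis unfolding V_def by (simp add: run_out Y_def O.prob_space)
qed

lemma V_0: "V 0 s = Y s"
proof -
  interpret O: prob_space \<Omega> by (rule Omega_prob)
  show ?thesis unfolding V_def by (simp add: O.prob_space)
qed

end



context sae begin

definition gfun :: "'l \<Rightarrow> real^'p \<Rightarrow> real \<times> (real^'r) \<Rightarrow> real" where
  "gfun l v x = (let f = pick_fork (t_forks (enabled P l v)) (fst x) in
      f_wt f v (snd x) * h (f_dest f) (f_upd f v (snd x)))"

lemma gfun_props:
  assumes l: "l \<noteq> w_out P"
  shows "integrable M0 (gfun l v)" "(\<integral>x. gfun l v x \<partial>M0) = ewt P h l v"
proof -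
  interpret PUD: pair_sigma_finite Unif "w_D P" by (rule ps_UD)
  interpret PR: prob_space M0 by (rule M0_prob)
  let ?\<tau> = "enabled P l v"
  let ?fs = "t_forks ?\<tau>"
  have t: "?\<tau> \<in> w_T P" using enabled(1)[OF l] .
  have pm: "(\<lambda>x. pick_fork ?fs (fst x)) \<in> M0 \<rightarrow>\<^sub>M count_space (set ?fs)"
  proof -
    have "pick_fork ?fs \<in> Unif \<rightarrow>\<^sub>M count_space (set ?fs)"
      using pick_fork_meas[OF T_props(2)[OF t] order_refl] by (simp add: measurable_cong_sets)
    then show ?thesis unfolding M0_def by (rule measurable_compose[OF measurable_fst])
  qed
  have each: "(\<lambda>x. f_wt f v (snd x) * h (f_dest f) (f_upd f v (snd x))) \<in> borel_measurable M0"
    if f: "f \<in> set ?fs" for f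
  proof -
    have vr: "(\<lambda>x. (v, snd x)) \<in> M0 \<rightarrow>\<^sub>M borel \<Otimes>\<^sub>M borel"
      unfolding M0_def by measurable
    have a: "(\<lambda>x. f_wt f v (snd x)) \<in> borel_measurable M0"
      using measurable_compose[OF vr T_props(7)[OF t f]] by simp
    have b: "(\<lambda>x. f_upd f v (snd x)) \<in> M0 \<rightarrow>\<^sub>M borel"
      using measurable_compose[OF vr T_props(6)[OF t f]] by simp
    have c: "(\<lambda>x. h (f_dest f) (f_upd f v (snd x))) \<in> borel_measurable M0"
      using measurable_compose[OF b] hmeas by blast
    show ?thesis using a c by (rule borel_measurable_times)
  qed
  have gm: "gfun l v \<in> borel_measurable M0"
    unfolding gfun_def Let_def
    by (rule measurable_compose_countable'[OF each pm]) (auto intro: countable_finite)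
  have gb: "\<bar>gfun l v x\<bar> \<le> K * CB" for x
  proof -
    let ?f = "pick_fork ?fs (fst x)"
    have "0 \<le> f_wt ?f v (snd x) \<and> f_wt ?f v (snd x) \<le> K"
      using wt_bound[OF t pick_in[OF l]] by blast
    then show ?thesis unfolding gfun_def Let_def
      using habs[of "f_dest ?f" "f_upd ?f v (snd x)"] CB_nonneg by (simp add: abs_mult mult_mono)
  qed
  show int: "integrable M0 (gfun l v)"
    by (rule PR.integrable_const_bound[where B="K * CB"]) (auto intro!: gb gm)
  have int': "integrable (Unif \<Otimes>\<^sub>M w_D P) (gfun l v)" using int by (simp add: M0_def)
  have "(\<integral>x. gfun l v x \<partial>M0) = (\<integral>u. (\<integral>r. gfun l v (u, r) \<partial>w_D P) \<partial>Unif)"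
    using PUD.integral_fst'[OF int'] by (simp add: M0_def)
  also have "\<dots> = (\<integral>u. (\<lambda>f. \<integral>r. f_wt f v r * h (f_dest f) (f_upd f v r) \<partial>w_D P) (pick_fork ?fs u) \<partial>Unif)"
    by (simp add: gfun_def Let_def)
  also have "\<dots> = (\<Sum>f\<leftarrow>?fs. f_prob f * (\<integral>r. f_wt f v r * h (f_dest f) (f_upd f v r) \<partial>w_D P))"
    by (rule has_bochner_integral_integral_eq[OF pick_fork_integral0])
       (use T_props[OF t] in auto)
  also have "\<dots> = ewt P h l v" using l by (simp add: ewt_def)
  finally show "(\<integral>x. gfun l v x \<partial>M0) = ewt P h l v" .
qed

lemma AE_supp: "AE x in M0. snd x \<in> supp_meas (w_D P)"
proof -
  interpret PUD: pair_sigma_finite Unif "w_D P" by (rule ps_UD)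
  have cl: "supp_meas (w_D P) \<in> sets borel" using supp_closed by (rule borel_closed)
  have "{x \<in> space (Unif \<Otimes>\<^sub>M w_D P). snd x \<in> supp_meas (w_D P)} \<in> sets (Unif \<Otimes>\<^sub>M w_D P)"
    using cl by measurable
  moreover have "AE x in Unif. AE y in w_D P. snd (x, y) \<in> supp_meas (w_D P)"
    using supp_AE[OF D_sets] by simp
  ultimately show ?thesis unfolding M0_def by (rule PUD.AE_pair_measure)
qed

lemma step_nonout:
  assumes "l \<noteq> w_out P"
  shows "step P (l, v, 1) x = (let f = pick_fork (t_forks (enabled P l v)) (fst x) in
           (f_dest f, f_upd f v (snd x), f_wt f v (snd x)))"
  using assms by (cases x) (simp add: step_def Let_def)

lemma V_le:
  assumes H: "PUWF P h"
  shows "(l, v) \<in> reachable P \<Longrightarrow> Inv (l, v, w) \<Longrightarrow> V n (l, v, w) \<le> w * h l v"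
proof (induction n arbitrary: l v w)
  case 0
  show ?case
  proof (cases "l = w_out P")
    case True then show ?thesis using 0 H by (auto simp: V_out PUWF_def)
  next
    case False then show ?thesis by (simp add: V_0 Y_def)
  qed
next
  case (Suc n)
  show ?case
  proof (cases "l = w_out P")
    case True then show ?thesis using Suc H by (auto simp: V_out PUWF_def)
  next
    case False
    have w: "w = 1" using Suc.prems False by (simp add: Inv_def)
    have "V (Suc n) (l, v, 1) = (\<integral>x. V n (step P (l, v, 1) x) \<partial>M0)"
      using V_Suc(1) Suc.prems w by simp
    also have "\<dots> \<le> (\<integral>x. gfun l v x \<partial>M0)"
    proof (rule integral_mono_AE)
      show "integrable M0 (\<lambda>x. V n (step P (l, v, 1) x))" using V_Suc(2) Suc.prems w by simp
      show "integrable M0 (gfun l v)" using gfun_props(1)[OF False] .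
      show "AE x in M0. V n (step P (l, v, 1) x) \<le> gfun l v x"
        using AE_supp
      proof eventually_elim
        case (elim x)
        let ?f = "pick_fork (t_forks (enabled P l v)) (fst x)"
        have r: "(f_dest ?f, f_upd ?f v (snd x)) \<in> reachable P"
          by (rule reachable.step[OF Suc.prems(1) False pick_in[OF False] elim])
        have I: "Inv (f_dest ?f, f_upd ?f v (snd x), f_wt ?f v (snd x))"
          using step_Inv[OF Suc.prems(2), of x] w step_nonout[OF False, of v x] by (simp add: Let_def)
        show ?case using Suc.IH[OF r I] step_nonout[OF False, of v x]
          by (simp add: Let_def gfun_def)
      qed
    qed
    also have "\<dots> = ewt P h l v" using gfun_props(2)[OF False] .
    also have "\<dots> \<le> h l v" using H Suc.prems(1) False by (auto simp: PUWF_def)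
    finally show ?thesis using w by simp
  qed
qed

lemma V_ge:
  assumes H: "PLWF P h"
  shows "(l, v) \<in> reachable P \<Longrightarrow> Inv (l, v, w) \<Longrightarrow> w * h l v \<le> V n (l, v, w)"
proof (induction n arbitrary: l v w)
  case 0
  show ?case
  proof (cases "l = w_out P")
    case True then show ?thesis using 0 H by (auto simp: V_out PLWF_def)
  next
    case False then show ?thesis by (simp add: V_0 Y_def)
  qed
next
  case (Suc n)
  show ?case
  proof (cases "l = w_out P")
    case True then show ?thesis using Suc H by (auto simp: V_out PLWF_def)
  next
    case False
    have w: "w = 1" using Suc.prems False by (simp add: Inv_def)
    have "h l v \<le> ewt P h l v" using H Suc.prems(1) False by (auto simp: PLWF_def)
    also have "\<dots> = (\<integral>x. gfun l v x \<partial>M0)" using gfun_props(2)[OF False] by simp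
    also have "\<dots> \<le> (\<integral>x. V n (step P (l, v, 1) x) \<partial>M0)"
    proof (rule integral_mono_AE)
      show "integrable M0 (\<lambda>x. V n (step P (l, v, 1) x))" using V_Suc(2) Suc.prems w by simp
      show "integrable M0 (gfun l v)" using gfun_props(1)[OF False] .
      show "AE x in M0. gfun l v x \<le> V n (step P (l, v, 1) x)"
        using AE_supp
      proof eventually_elim
        case (elim x)
        let ?f = "pick_fork (t_forks (enabled P l v)) (fst x)"
        have r: "(f_dest ?f, f_upd ?f v (snd x)) \<in> reachable P"
          by (rule reachable.step[OF Suc.prems(1) False pick_in[OF False] elim])
        have I: "Inv (f_dest ?f, f_upd ?f v (snd x), f_wt ?f v (snd x))"
          using step_Inv[OF Suc.prems(2), of x] w step_nonout[OF False, of v x] by (simp add: Let_def)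
        show ?case using Suc.IH[OF r I] step_nonout[OF False, of v x]
          by (simp add: Let_def gfun_def)
      qed
    qed
    also have "\<dots> = V (Suc n) (l, v, 1)"
      using V_Suc(1) Suc.prems w by simp
    finally show ?thesis using w by simp
  qed
qed

end



context sae begin

lemma run_stay: "fst (run P s \<omega> m) = w_out P \<Longrightarrow> run P s \<omega> (m + k) = run P s \<omega> m"
  by (induction k) (auto simp: step_def split: prod.splits)

lemma limit:
  assumes v: "v \<in> supp_meas (w_mu P)"
  shows "\<exists>L. (\<lambda>n. V n (w_init P, v, 1)) \<longlonglongrightarrow> L \<and> enn2ereal (expected_weight P v UNIV) = ereal L"
proof -
  interpret O: prob_space \<Omega> by (rule Omega_prob)
  define s0 where "s0 = (w_init P, v, 1::real)"
  have I0: "Inv s0" using K by (simp add: s0_def Inv_def)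
  have "AST P" using sae by (simp add: score_at_end_def)
  then have em: "emeasure \<Omega> {\<omega> \<in> space \<Omega>. terminates P s0 \<omega>} = 1"
    using v unfolding AST_def s0_def by blast
  then have "O.prob {\<omega> \<in> space \<Omega>. terminates P s0 \<omega>} = 1"
    by (simp add: measure_def)
  from O.AE_prob_1[OF this] have AEt: "AE \<omega> in \<Omega>. terminates P s0 \<omega>" by simp
  define Yn where "Yn n \<omega> = Y (run P s0 \<omega> n)" for n \<omega>
  have Ym: "Yn n \<in> borel_measurable \<Omega>" for n
    unfolding Yn_def by (rule measurable_compose[OF run_meas_s Y_meas])
  define Lim where "Lim \<omega> = lim (\<lambda>n. Yn n \<omega>)" for \<omega>
  have Lm: "Lim \<in> borel_measurable \<Omega>" unfolding Lim_def using Ym by measurable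
  define Tt where "Tt \<omega> = term_time P s0 \<omega>" for \<omega>
  have conv: "(\<lambda>n. Yn n \<omega>) \<longlonglongrightarrow> snd (snd (run P s0 \<omega> (Tt \<omega>)))
      \<and> Lim \<omega> = snd (snd (run P s0 \<omega> (Tt \<omega>)))" if t: "terminates P s0 \<omega>" for \<omega>
  proof -
    have o: "fst (run P s0 \<omega> (Tt \<omega>)) = w_out P"
      using t unfolding terminates_def Tt_def term_time_def by (rule LeastI_ex)
    have "Y (run P s0 \<omega> (Tt \<omega>)) = snd (snd (run P s0 \<omega> (Tt \<omega>)))"
      using o by (cases "run P s0 \<omega> (Tt \<omega>)") (simp add: Y_def)
    moreover have "\<forall>n\<ge>Tt \<omega>. Yn n \<omega> = Y (run P s0 \<omega> (Tt \<omega>))"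
    proof (intro allI impI)
      fix n assume "Tt \<omega> \<le> n"
      then obtain k where "n = Tt \<omega> + k" using le_Suc_ex by blast
      then show "Yn n \<omega> = Y (run P s0 \<omega> (Tt \<omega>))" unfolding Yn_def using run_stay[OF o] by simp
    qed
    ultimately have c: "(\<lambda>n. Yn n \<omega>) \<longlonglongrightarrow> snd (snd (run P s0 \<omega> (Tt \<omega>)))"
      by (intro tendsto_eventually) (auto simp: eventually_sequentially)
    then show ?thesis unfolding Lim_def using limI by blast
  qed
  have lim_ae: "AE \<omega> in \<Omega>. (\<lambda>n. Yn n \<omega>) \<longlonglongrightarrow> Lim \<omega>"
    using AEt by eventually_elim (use conv in auto)
  have bnd: "AE \<omega> in \<Omega>. norm (Yn n \<omega>) \<le> C" for n
    unfolding Yn_def by (auto intro!: Y_bound run_Inv I0)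
  have intL: "integrable \<Omega> Lim"
    by (rule integrable_dominated_convergence[OF Lm Ym _ lim_ae bnd]) simp
  have tends: "(\<lambda>n. V n s0) \<longlonglongrightarrow> (\<integral>\<omega>. Lim \<omega> \<partial>\<Omega>)"
    using integral_dominated_convergence[OF Lm Ym _ lim_ae bnd] unfolding V_def Yn_def by simp
  have nonneg: "AE \<omega> in \<Omega>. 0 \<le> Lim \<omega>"
    using AEt
  proof eventually_elim
    case (elim \<omega>)
    have "Inv (run P s0 \<omega> (Tt \<omega>))" by (rule run_Inv[OF I0])
    then have "0 \<le> snd (snd (run P s0 \<omega> (Tt \<omega>)))"
      by (cases "run P s0 \<omega> (Tt \<omega>)") (simp add: Inv_def)
    then show ?case using conv[OF elim] by simp
  qed
  have "expected_weight P v UNIV = (\<integral>\<^sup>+\<omega>. ennreal (Lim \<omega>) \<partial>\<Omega>)"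
    unfolding expected_weight_def s0_def[symmetric] Let_def
  proof (rule nn_integral_cong_AE)
    show "AE \<omega> in \<Omega>. (if terminates P s0 \<omega> \<and> fst (snd (run P s0 \<omega> (term_time P s0 \<omega>))) \<in> UNIV
           then ennreal (snd (snd (run P s0 \<omega> (term_time P s0 \<omega>)))) else 0) = ennreal (Lim \<omega>)"
      using AEt by eventually_elim (use conv in \<open>auto simp: Tt_def\<close>)
  qed
  also have "\<dots> = ennreal (\<integral>\<omega>. Lim \<omega> \<partial>\<Omega>)"
    by (rule nn_integral_eq_integral[OF intL nonneg])
  finally have ew: "expected_weight P v UNIV = ennreal (\<integral>\<omega>. Lim \<omega> \<partial>\<Omega>)" .
  have "0 \<le> (\<integral>\<omega>. Lim \<omega> \<partial>\<Omega>)" using nonneg by (rule integral_nonneg_AE)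
  then have "enn2ereal (expected_weight P v UNIV) = ereal (\<integral>\<omega>. Lim \<omega> \<partial>\<Omega>)"
    using ew by simp
  then show ?thesis using tends unfolding s0_def by blast
qed

end


theorem theorem4p2:
  fixes P :: "('l::finite, 'p::finite, 'r::finite) wpts"
    and h :: "'l \<Rightarrow> real^'p \<Rightarrow> real"
  assumes "score_at_end P"
    and "\<exists>B. \<forall>l v. \<bar>h l v\<bar> \<le> B"
    and "\<forall>l. h l \<in> borel_measurable borel"
  shows "(PUWF P h \<longrightarrow> (\<forall>v\<in>supp_meas (w_mu P).
             enn2ereal (expected_weight P v UNIV) \<le> ereal (h (w_init P) v))) \<and>
         (PLWF P h \<longrightarrow> (\<forall>v\<in>supp_meas (w_mu P).
             ereal (h (w_init P) v) \<le> enn2ereal (expected_weight P v UNIV)))"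
proof -
  interpret S: sae P h by (rule sae.intro) (use assms in auto)
  show ?thesis
  proof (intro conjI impI ballI)
    fix v assume H: "PUWF P h" and v: "v \<in> supp_meas (w_mu P)"
    obtain L where L: "(\<lambda>n. S.V n (w_init P, v, 1)) \<longlonglongrightarrow> L"
      and e: "enn2ereal (expected_weight P v UNIV) = ereal L" using S.limit[OF v] by blast
    have r: "(w_init P, v) \<in> reachable P" by (rule reachable.init[OF v])
    have I: "S.Inv (w_init P, v, 1)" using S.K by (simp add: S.Inv_def)
    have "L \<le> h (w_init P) v"
      by (rule LIMSEQ_le_const2[OF L]) (use S.V_le[OF H r I] in auto)
    then show "enn2ereal (expected_weight P v UNIV) \<le> ereal (h (w_init P) v)" using e by simp
  next
    fix v assume H: "PLWF P h" and v: "v \<in> supp_meas (w_mu P)"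
    obtain L where L: "(\<lambda>n. S.V n (w_init P, v, 1)) \<longlonglongrightarrow> L"
      and e: "enn2ereal (expected_weight P v UNIV) = ereal L" using S.limit[OF v] by blast
    have r: "(w_init P, v) \<in> reachable P" by (rule reachable.init[OF v])
    have I: "S.Inv (w_init P, v, 1)" using S.K by (simp add: S.Inv_def)
    have "h (w_init P) v \<le> L"
      by (rule LIMSEQ_le_const[OF L]) (use S.V_ge[OF H r I] in auto)
    then show "ereal (h (w_init P) v) \<le> enn2ereal (expected_weight P v UNIV)" using e by simp
  qed
qed

end
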